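(* Let $\delta:\,]0,+\infty[\to\mathbb R$ be nonnegative, bounded and continuously differentiable, and let $r:\,]\alpha,\omega[\to\,]0,+\infty[$ be a solution of $\ddot r+\delta(r)\dot r=-1/r^2$ which is maximal both to the left and to the right. Let $h(t)=\frac12\dot r(t)^2-\frac1{r(t)}$ (a nonincreasing function). If $\alpha>-\infty$, then: (i) $\lim_{t\downarrow\alpha}r(t)=0$; (ii) $h(\alpha):=\lim_{t\downarrow\alpha}h(t)<+\infty$; (iii) $\lim_{t\downarrow\alpha}\dfrac{r(t)}{(t-\alpha)^{2/3}}=\sqrt[3]{9/2}$. *)

theory Defs
  imports "HOL-Analysis.Analysis" "HOL-Library.Extended_Real"
begin

definition ivl :: "real \<Rightarrow> ereal \<Rightarrow> real set" where
  "ivl a w = {t. a < t \<and> ereal t < w}"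

definition is_sol :: "(real \<Rightarrow> real) \<Rightarrow> real set \<Rightarrow> (real \<Rightarrow> real) \<Rightarrow> bool" where
  "is_sol \<delta> I r \<longleftrightarrow>
     (\<forall>t\<in>I. 0 < r t \<and> (r has_real_derivative deriv r t) (at t) \<and>
        (deriv r has_real_derivative (- \<delta> (r t) * deriv r t - 1 / (r t)\<^sup>2)) (at t))"

definition max_left :: "(real \<Rightarrow> real) \<Rightarrow> real \<Rightarrow> ereal \<Rightarrow> (real \<Rightarrow> real) \<Rightarrow> bool" where
  "max_left \<delta> a w r \<longleftrightarrow>
     \<not> (\<exists>b s. b < a \<and> is_sol \<delta> (ivl b w) s \<and> (\<forall>t\<in>ivl a w. s t = r t))"

definition max_right :: "(real \<Rightarrow> real) \<Rightarrow> real \<Rightarrow> ereal \<Rightarrow> (real \<Rightarrow> real) \<Rightarrow> bool" where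
  "max_right \<delta> a w r \<longleftrightarrow>
     \<not> (\<exists>w' s. w < w' \<and> is_sol \<delta> (ivl a w') s \<and> (\<forall>t\<in>ivl a w. s t = r t))"

end

theory Submission
  imports Defs
begin


lemma ode_exist:
  fixes G :: "real \<times> real \<Rightarrow> real \<times> real" and x0 :: "real \<times> real"
  assumes Gb: "\<And>x. norm (G x) \<le> M" and GL: "\<And>x y. norm (G x - G y) \<le> L * norm (x - y)"
    and L: "0 \<le> L" and eta: "0 < \<eta>" "\<eta> * L \<le> 1/2"
  shows "\<exists>y. y 0 = x0 \<and> (\<forall>\<tau>\<in>{0..\<eta>}. (y has_vector_derivative G (y \<tau>)) (at \<tau> within {0..\<eta>})
            \<and> norm (y \<tau> - x0) \<le> M * \<tau>)"
proof -
  have M: "0 \<le> M" using Gb[of 0] norm_ge_zero order_trans by blast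
  have Gc: "continuous_on UNIV G"
  proof (rule continuous_on_subset[OF lipschitz_on_continuous_on])
    show "L-lipschitz_on UNIV G" by (rule lipschitz_onI) (use GL L in \<open>auto simp: dist_norm\<close>)
  qed auto
  define cl where "cl \<tau> = max 0 (min \<eta> \<tau>)" for \<tau> :: real
  have cl_in: "cl \<tau> \<in> {0..\<eta>}" for \<tau> using eta by (auto simp: cl_def)
  have clc: "continuous_on UNIV cl" unfolding cl_def by (intro continuous_intros)
  define Q where "Q f = (\<lambda>\<tau>. x0 + integral {0..cl \<tau>} (\<lambda>s. G (apply_bcontfun f s)))"
    for f :: "(real, real \<times> real) bcontfun"
  have gc: "continuous_on S (\<lambda>s. G (apply_bcontfun f s))" for f :: "(real, real \<times> real) bcontfun" and S
    by (rule continuous_on_compose2[OF Gc]) auto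
  have Qbc: "Q f \<in> bcontfun" for f
  proof (rule bcontfun_normI)
    have "continuous_on {0..\<eta>} (\<lambda>u. integral {0..u} (\<lambda>s. G (apply_bcontfun f s)))"
      by (rule indefinite_integral_continuous_1, rule integrable_continuous_real, rule gc)
    then have "continuous_on UNIV (\<lambda>\<tau>. integral {0..cl \<tau>} (\<lambda>s. G (apply_bcontfun f s)))"
      by (rule continuous_on_compose2[OF _ clc]) (use cl_in in auto)
    then show "continuous_on UNIV (Q f)" unfolding Q_def by (intro continuous_intros)
    fix \<tau>
    have "norm (integral {0..cl \<tau>} (\<lambda>s. G (apply_bcontfun f s))) \<le> M * (cl \<tau> - 0)"
      by (rule integral_bound) (use cl_in[of \<tau>] gc Gb in auto)
    also have "\<dots> \<le> M * \<eta>" using cl_in[of \<tau>] M by (auto intro: mult_left_mono)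
    finally show "norm (Q f \<tau>) \<le> norm x0 + M * \<eta>" unfolding Q_def
      by (meson add_left_mono norm_triangle_ineq order_trans)
  qed
  define P where "P f = Bcontfun (Q f)" for f
  have Papp: "apply_bcontfun (P f) = Q f" for f unfolding P_def using Qbc Bcontfun_inverse by blast
  have contr: "dist (P f) (P g) \<le> (1/2) * dist f g" for f g
  proof (rule dist_bound)
    fix \<tau>
    have "dist (P f \<tau>) (P g \<tau>) = norm (integral {0..cl \<tau>} (\<lambda>s. G (apply_bcontfun f s) - G (apply_bcontfun g s)))"
      unfolding Papp Q_def dist_norm
      by (subst integral_diff) (auto intro!: integrable_continuous_real gc)
    also have "\<dots> \<le> (L * dist f g) * (cl \<tau> - 0)"
    proof (rule integral_bound)
      show "continuous_on {0..cl \<tau>} (\<lambda>s. G (apply_bcontfun f s) - G (apply_bcontfun g s))"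
        by (intro continuous_intros gc)
      fix s
      have "norm (G (apply_bcontfun f s) - G (apply_bcontfun g s)) \<le> L * norm (apply_bcontfun f s - apply_bcontfun g s)"
        by (rule GL)
      also have "\<dots> \<le> L * dist f g" using dist_bounded[of f s g] L by (auto simp: dist_norm intro: mult_left_mono)
      finally show "norm (G (apply_bcontfun f s) - G (apply_bcontfun g s)) \<le> L * dist f g" .
    qed (use cl_in[of \<tau>] in auto)
    also have "\<dots> \<le> (L * dist f g) * \<eta>" using cl_in[of \<tau>] L by (auto intro!: mult_left_mono)
    also have "\<dots> = (\<eta> * L) * dist f g" by simp
    also have "\<dots> \<le> (1/2) * dist f g" using eta by (intro mult_right_mono) auto
    finally show "dist (P f \<tau>) (P g \<tau>) \<le> (1/2) * dist f g" .
  qed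
  obtain yf where yf: "P yf = yf" using banach_fix_type[of "1/2" P] contr by auto
  define y where "y = apply_bcontfun yf"
  have yeq: "y \<tau> = x0 + integral {0..\<tau>} (\<lambda>s. G (y s))" if "\<tau> \<in> {0..\<eta>}" for \<tau>
  proof -
    have "y \<tau> = Q yf \<tau>" unfolding y_def by (metis Papp yf)
    also have "cl \<tau> = \<tau>" using that by (auto simp: cl_def)
    ultimately show ?thesis unfolding Q_def y_def by simp
  qed
  have yc: "continuous_on S (\<lambda>s. G (y s))" for S unfolding y_def by (rule gc)
  show ?thesis
  proof (intro exI conjI ballI)
    show "y 0 = x0" using yeq[of 0] eta by simp
    fix \<tau> assume t: "\<tau> \<in> {0..\<eta>}"
    have "((\<lambda>u. x0 + integral {0..u} (\<lambda>s. G (y s))) has_vector_derivative (0 + G (y \<tau>))) (at \<tau> within {0..\<eta>})"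
      by (intro derivative_intros integral_has_vector_derivative yc t)
    then have "((\<lambda>u. x0 + integral {0..u} (\<lambda>s. G (y s))) has_vector_derivative (G (y \<tau>))) (at \<tau> within {0..\<eta>})"
      by simp
    then show "(y has_vector_derivative G (y \<tau>)) (at \<tau> within {0..\<eta>})"
      by (rule has_vector_derivative_transform_within[where d=1]) (use t yeq in auto)
    have "norm (integral {0..\<tau>} (\<lambda>s. G (y s))) \<le> M * (\<tau> - 0)"
      by (rule integral_bound) (use t yc Gb in auto)
    then show "norm (y \<tau> - x0) \<le> M * \<tau>" using yeq[OF t] by simp
  qed
qed



lemma antimono_limit_right:
  fixes f :: "real \<Rightarrow> real"
  assumes ab: "a < b" and mono: "\<And>x y. a < x \<Longrightarrow> x \<le> y \<Longrightarrow> y < b \<Longrightarrow> f y \<le> f x"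
    and bd: "\<And>x. a < x \<Longrightarrow> x < b \<Longrightarrow> f x \<le> B"
  shows "\<exists>L. (f \<longlongrightarrow> L) (at_right a)"
proof -
  define S where "S = f ` {a<..<b}"
  have ne: "S \<noteq> {}" using ab by (auto simp: S_def)
  have bdd: "bdd_above S" using bd by (auto simp: S_def bdd_above_def intro!: exI[of _ B])
  show ?thesis
  proof (intro exI order_tendstoI)
    fix y assume "y < Sup S"
    then obtain x where x: "x \<in> {a<..<b}" "y < f x" using less_cSup_iff[OF ne bdd] by (auto simp: S_def)
    show "eventually (\<lambda>t. y < f t) (at_right a)"
      unfolding eventually_at_right_field
      by (rule exI[of _ x]) (use x mono in \<open>auto intro: less_le_trans\<close>)
  next
    fix y assume "Sup S < y"
    show "eventually (\<lambda>t. f t < y) (at_right a)"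
      unfolding eventually_at_right_field
    proof (rule exI[of _ b], intro conjI allI impI)
      fix t assume "a < t" "t < b"
      then have "f t \<le> Sup S" by (intro cSup_upper bdd) (auto simp: S_def)
      then show "f t < y" using \<open>Sup S < y\<close> by simp
    qed (use ab in auto)
  qed
qed

lemma deriv_limit_right:
  fixes f f' :: "real \<Rightarrow> real"
  assumes ab: "a < b" and der: "\<And>t. a < t \<Longrightarrow> t < b \<Longrightarrow> (f has_real_derivative f' t) (at t)"
    and fa: "(f \<longlongrightarrow> fa) (at_right a)" and fl: "(f' \<longlongrightarrow> l) (at_right a)"
  shows "((\<lambda>t. (f t - fa) / (t - a)) \<longlongrightarrow> l) (at_right a)"
proof (rule tendstoI)
  fix e :: real assume e: "0 < e"
  from tendstoD[OF fl, of "e/2"] e obtain d where d: "d > a" "\<And>t. a < t \<Longrightarrow> t < d \<Longrightarrow> dist (f' t) l < e/2"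
    unfolding eventually_at_right_field by auto
  show "eventually (\<lambda>t. dist ((f t - fa) / (t - a)) l < e) (at_right a)"
    unfolding eventually_at_right_field
  proof (rule exI[of _ "min b d"], intro conjI allI impI)
    fix t assume t: "a < t" "t < min b d"
    have key: "\<bar>f t - f s - l * (t - s)\<bar> \<le> (t - s) * (e/2)" if s: "a < s" "s < t" for s
    proof -
      have "continuous_on {s..t} f"
        using der s t by (intro DERIV_continuous_on[of _ _ f']) (auto intro: has_field_derivative_at_within)
      moreover have "f differentiable (at x)" if "s < x" "x < t" for x
        using der[of x] that s t by (auto simp: real_differentiable_def)
      ultimately obtain k z where z: "s < z" "z < t" "DERIV f z :> k" "f t - f s = (t - s) * k"
        using MVT[of s t f] s by blast
      have "k = f' z" using z der[of z] s t DERIV_unique by fastforce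
      then have "\<bar>k - l\<bar> < e/2" using d(2)[of z] z s t by (auto simp: dist_real_def)
      then have "\<bar>(t - s) * (k - l)\<bar> \<le> (t - s) * (e/2)" using s
        by (auto simp: abs_mult intro: mult_left_mono)
      moreover have "f t - f s - l * (t - s) = (t - s) * (k - l)" using z(4) by (simp add: algebra_simps)
      ultimately show ?thesis by simp
    qed
    have lim: "((\<lambda>s. \<bar>f t - f s - l * (t - s)\<bar>) \<longlongrightarrow> \<bar>f t - fa - l * (t - a)\<bar>) (at_right a)"
      by (intro tendsto_intros fa)
    have "\<bar>f t - fa - l * (t - a)\<bar> \<le> (t - a) * (e/2)"
    proof (rule tendsto_le[OF _ _ lim])
      show "((\<lambda>s. (t - s) * (e/2)) \<longlongrightarrow> (t - a) * (e/2)) (at_right a)" by (intro tendsto_intros)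
      show "\<forall>\<^sub>F s in at_right a. \<bar>f t - f s - l * (t - s)\<bar> \<le> (t - s) * (e/2)"
        unfolding eventually_at_right_field by (rule exI[of _ t]) (use t key in auto)
    qed simp
    moreover have eq1: "(f t - fa) / (t - a) - l = (f t - fa - l * (t - a)) / (t - a)"
      using t by (simp add: field_simps)
    moreover have eq2: "\<bar>(f t - fa - l * (t - a)) / (t - a)\<bar> = \<bar>f t - fa - l * (t - a)\<bar> / (t - a)"
      using t by (simp add: abs_divide)
    moreover have le: "\<bar>f t - fa - l * (t - a)\<bar> / (t - a) \<le> e/2"
      using t \<open>\<bar>f t - fa - l * (t - a)\<bar> \<le> (t - a) * (e/2)\<close>
      by (subst pos_divide_le_eq) (auto simp: mult_ac)
    ultimately have "\<bar>(f t - fa) / (t - a) - l\<bar> \<le> e/2" by (simp only: eq1 eq2)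
    then show "dist ((f t - fa) / (t - a)) l < e" using e by (simp add: dist_real_def)
  qed (use ab d in auto)
qed

lemma deriv_limit_left:
  fixes f f' :: "real \<Rightarrow> real"
  assumes ab: "b < a" and der: "\<And>t. b < t \<Longrightarrow> t < a \<Longrightarrow> (f has_real_derivative f' t) (at t)"
    and fa: "(f \<longlongrightarrow> fa) (at_left a)" and fl: "(f' \<longlongrightarrow> l) (at_left a)"
  shows "((\<lambda>t. (f t - fa) / (t - a)) \<longlongrightarrow> l) (at_left a)"
proof -
  define g where "g = (\<lambda>t. - f (- t))"
  have der': "(g has_real_derivative f' (- t)) (at t)" if "-a < t" "t < -b" for t
  proof -
    have "((\<lambda>t. - f (- t)) has_real_derivative - (f' (- t) * - 1)) (at t)"
      by (intro derivative_intros DERIV_chain2[OF der]) (use that in auto)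
    then show ?thesis by (simp add: g_def)
  qed
  have ga: "(g \<longlongrightarrow> - fa) (at_right (- a))"
  proof -
    have "((\<lambda>x. f (- x)) \<longlongrightarrow> fa) (at_right (- a))" using fa by (subst (asm) filterlim_at_left_to_right)
    then show ?thesis unfolding g_def by (intro tendsto_intros)
  qed
  have gl: "((\<lambda>t. f' (- t)) \<longlongrightarrow> l) (at_right (- a))"
    using fl by (simp add: filterlim_at_left_to_right)
  have "((\<lambda>t. (g t - - fa) / (t - - a)) \<longlongrightarrow> l) (at_right (- a))"
    by (rule deriv_limit_right[OF _ der' ga gl]) (use ab in auto)
  moreover have "(g t - - fa) / (t - - a) = (f (- t) - fa) / (- t - a)" for t
  proof (cases "t + a = 0")
    case False
    then have "- t - a \<noteq> 0" by linarith
    with False show ?thesis unfolding g_def by (simp add: field_simps)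
  qed (simp add: g_def)
  ultimately show ?thesis
    unfolding filterlim_at_left_to_right[of _ _ a] by simp
qed

lemma lip_deriv:
  fixes f f' :: "real \<Rightarrow> real"
  assumes der: "\<And>x. a \<le> x \<Longrightarrow> x \<le> b \<Longrightarrow> (f has_real_derivative f' x) (at x)"
    and bd: "\<And>x. a \<le> x \<Longrightarrow> x \<le> b \<Longrightarrow> \<bar>f' x\<bar> \<le> B"
    and x: "a \<le> x" "x \<le> b" and y: "a \<le> y" "y \<le> b"
  shows "\<bar>f x - f y\<bar> \<le> B * \<bar>x - y\<bar>"
proof -
  have *: "\<bar>f q - f p\<bar> \<le> B * (q - p)" if "a \<le> p" "p < q" "q \<le> b" for p q
  proof -
    have "\<exists>z>p. z < q \<and> f q - f p = (q - p) * f' z"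
      by (rule MVT2) (use that der in auto)
    then obtain z where z: "p < z" "z < q" "f q - f p = (q - p) * f' z" by blast
    have "\<bar>(q - p) * f' z\<bar> \<le> (q - p) * B" using bd[of z] z that
      by (auto simp: abs_mult intro: mult_left_mono)
    then show ?thesis using z by (simp add: mult.commute)
  qed
  show ?thesis
    using *[of x y] *[of y x] x y by (cases x y rule: linorder_cases) (auto simp: abs_minus_commute)
qed



lemma vd_fst: "(y has_vector_derivative y') F \<Longrightarrow> ((\<lambda>t. fst (y t)) has_real_derivative fst y') F"
proof -
  assume "(y has_vector_derivative y') F"
  from has_derivative_fst[OF this[unfolded has_vector_derivative_def]]
  have "((\<lambda>t. fst (y t)) has_derivative (\<lambda>x. x * fst y')) F" by simp
  moreover have "(\<lambda>x. x * fst y') = (*) (fst y')" by (rule ext) (simp add: mult.commute)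
  ultimately show ?thesis by (simp add: has_field_derivative_def)
qed

lemma vd_snd: "(y has_vector_derivative y') F \<Longrightarrow> ((\<lambda>t. snd (y t)) has_real_derivative snd y') F"
proof -
  assume "(y has_vector_derivative y') F"
  from has_derivative_snd[OF this[unfolded has_vector_derivative_def]]
  have "((\<lambda>t. snd (y t)) has_derivative (\<lambda>x. x * snd y')) F" by simp
  moreover have "(\<lambda>x. x * snd y') = (*) (snd y')" by (rule ext) (simp add: mult.commute)
  ultimately show ?thesis by (simp add: has_field_derivative_def)
qed

lemma clamp_lip: "a \<le> b \<Longrightarrow> \<bar>max a (min b x) - max a (min b y)\<bar> \<le> \<bar>x - y\<bar>" for a b x y :: real
  by (auto simp: max_def min_def)

lemma clamp_rng: "a \<le> b \<Longrightarrow> a \<le> max a (min b x) \<and> max a (min b x) \<le> b" for a b x :: real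
  by (auto simp: max_def min_def)

lemma clamp_id: "a \<le> x \<Longrightarrow> x \<le> b \<Longrightarrow> max a (min b x) = x" for a b x :: real
  by (auto simp: max_def min_def)

lemma invsq_lip:
  fixes a x y :: real
  assumes a: "0 < a" "a \<le> x" "a \<le> y"
  shows "\<bar>1 / x\<^sup>2 - 1 / y\<^sup>2\<bar> \<le> 2 / a^3 * \<bar>x - y\<bar>"
proof (rule lip_deriv[where a = a and b = "max x y" and f' = "\<lambda>x. - 2 / x^3"])
  fix z assume z: "a \<le> z" "z \<le> max x y"
  then have z0: "0 < z" using a by simp
  have "((\<lambda>x. 1 / x\<^sup>2) has_real_derivative - (1 * (2 * z)) / (z\<^sup>2)\<^sup>2) (at z)"
    using z0 by (auto intro!: derivative_eq_intros simp: power2_eq_square)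
  moreover have "- (1 * (2 * z)) / (z\<^sup>2)\<^sup>2 = - 2 / z^3" using z0
    by (simp add: power2_eq_square power3_eq_cube field_simps)
  ultimately show "((\<lambda>x. 1 / x\<^sup>2) has_real_derivative - 2 / z^3) (at z)" by simp
  have "a^3 \<le> z^3" using z a by (intro power_mono) auto
  then have "2 / z^3 \<le> 2 / a^3" using a z0 by (intro divide_left_mono) auto
  then show "\<bar>- 2 / z^3\<bar> \<le> 2 / a^3" using z0 by simp
qed (use a in auto)

lemma G_props:
  fixes \<delta> :: "real \<Rightarrow> real" and a bR cW D B1 :: real
  assumes a: "0 < a" "a \<le> bR" and cW: "0 \<le> cW"
    and Dd: "\<And>x. a \<le> x \<Longrightarrow> x \<le> bR \<Longrightarrow> \<bar>\<delta> x\<bar> \<le> D"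
    and Ld: "\<And>x y. a \<le> x \<Longrightarrow> x \<le> bR \<Longrightarrow> a \<le> y \<Longrightarrow> y \<le> bR \<Longrightarrow> \<bar>\<delta> x - \<delta> y\<bar> \<le> B1 * \<bar>x - y\<bar>"
    and B1: "0 \<le> B1" and D: "0 \<le> D"
  defines "G \<equiv> \<lambda>p. (- (max (-cW) (min cW (snd p))),
      \<delta> (max a (min bR (fst p))) * max (-cW) (min cW (snd p)) + 1 / (max a (min bR (fst p)))\<^sup>2)"
  shows "norm (G p) \<le> cW + D * cW + 1 / a\<^sup>2"
    and "norm (G p - G q) \<le> (1 + D + cW * B1 + 2 / a^3) * norm (p - q)"
proof -
  define R1 where "R1 = max a (min bR (fst p))"
  define R2 where "R2 = max a (min bR (fst q))"
  define W1 where "W1 = max (-cW) (min cW (snd p))"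
  define W2 where "W2 = max (-cW) (min cW (snd q))"
  have R1: "a \<le> R1" "R1 \<le> bR" using clamp_rng[OF a(2)] by (auto simp: R1_def)
  have R2: "a \<le> R2" "R2 \<le> bR" using clamp_rng[OF a(2)] by (auto simp: R2_def)
  have W1: "\<bar>W1\<bar> \<le> cW" using clamp_rng[of "-cW" cW] cW by (auto simp: W1_def)
  have W2: "\<bar>W2\<bar> \<le> cW" using clamp_rng[of "-cW" cW] cW by (auto simp: W2_def)
  have Gp: "G p = (- W1, \<delta> R1 * W1 + 1 / R1\<^sup>2)" by (simp add: G_def R1_def W1_def)
  have Gq: "G q = (- W2, \<delta> R2 * W2 + 1 / R2\<^sup>2)" by (simp add: G_def R2_def W2_def)
  have "norm (G p) \<le> norm (- W1) + norm (\<delta> R1 * W1 + 1 / R1\<^sup>2)" unfolding Gp by (rule norm_Pair_le)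
  also have "\<dots> \<le> cW + (D * cW + 1 / a\<^sup>2)"
  proof (intro add_mono)
    show "norm (- W1) \<le> cW" using W1 by simp
    have "\<bar>\<delta> R1 * W1\<bar> \<le> D * cW" unfolding abs_mult
      using Dd[OF R1] W1 by (intro mult_mono) auto
    moreover have "1 / R1\<^sup>2 \<le> 1 / a\<^sup>2" using R1 a
      by (intro divide_left_mono power_mono) auto
    moreover have "0 \<le> 1 / R1\<^sup>2" by simp
    moreover have "\<bar>1 / R1\<^sup>2\<bar> = 1 / R1\<^sup>2" by simp
    ultimately show "norm (\<delta> R1 * W1 + 1 / R1\<^sup>2) \<le> D * cW + 1 / a\<^sup>2"
      using abs_triangle_ineq[of "\<delta> R1 * W1" "1 / R1\<^sup>2"] by (simp only: real_norm_def)
  qed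
  finally show "norm (G p) \<le> cW + D * cW + 1 / a\<^sup>2" by simp
  have dr: "\<bar>R1 - R2\<bar> \<le> norm (p - q)"
  proof -
    have "dist (fst p) (fst q) \<le> dist p q" by (rule dist_fst_le)
    then have "\<bar>fst p - fst q\<bar> \<le> norm (p - q)" by (simp add: dist_norm dist_real_def)
    then show ?thesis using clamp_lip[OF a(2), of "fst p" "fst q"] by (simp add: R1_def R2_def)
  qed
  have dw: "\<bar>W1 - W2\<bar> \<le> norm (p - q)"
  proof -
    have "dist (snd p) (snd q) \<le> dist p q" by (rule dist_snd_le)
    then have "\<bar>snd p - snd q\<bar> \<le> norm (p - q)" by (simp add: dist_norm dist_real_def)
    then show ?thesis using clamp_lip[of "-cW" cW "snd p" "snd q"] cW by (simp add: W1_def W2_def)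
  qed
  have "G p - G q = (- (W1 - W2), \<delta> R1 * (W1 - W2) + W2 * (\<delta> R1 - \<delta> R2) + (1 / R1\<^sup>2 - 1 / R2\<^sup>2))"
    unfolding Gp Gq by (simp add: algebra_simps)
  then have "norm (G p - G q) \<le> norm (- (W1 - W2)) + norm (\<delta> R1 * (W1 - W2) + W2 * (\<delta> R1 - \<delta> R2) + (1 / R1\<^sup>2 - 1 / R2\<^sup>2))"
    using norm_Pair_le by metis
  also have "\<dots> \<le> norm (p - q) + (D * norm (p - q) + cW * B1 * norm (p - q) + 2 / a^3 * norm (p - q))"
  proof (intro add_mono)
    show "norm (- (W1 - W2)) \<le> norm (p - q)" using dw by simp
    have "\<bar>\<delta> R1 * (W1 - W2)\<bar> \<le> D * norm (p - q)" unfolding abs_mult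
      using Dd[OF R1] dw by (intro mult_mono) auto
    moreover have "\<bar>W2 * (\<delta> R1 - \<delta> R2)\<bar> \<le> cW * (B1 * norm (p - q))" unfolding abs_mult
    proof (intro mult_mono W2)
      show "\<bar>\<delta> R1 - \<delta> R2\<bar> \<le> B1 * norm (p - q)"
        using Ld[OF R1 R2] mult_left_mono[OF dr B1] by linarith
    qed (use cW in auto)
    moreover have "\<bar>1 / R1\<^sup>2 - 1 / R2\<^sup>2\<bar> \<le> 2 / a^3 * norm (p - q)"
      using invsq_lip[OF a(1) R1(1) R2(1)] mult_left_mono[OF dr, of "2 / a^3"] a by simp
    ultimately show "norm (\<delta> R1 * (W1 - W2) + W2 * (\<delta> R1 - \<delta> R2) + (1 / R1\<^sup>2 - 1 / R2\<^sup>2))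
        \<le> D * norm (p - q) + cW * B1 * norm (p - q) + 2 / a^3 * norm (p - q)"
      by (simp add: mult.assoc)
  qed
  also have "\<dots> = (1 + D + cW * B1 + 2 / a^3) * norm (p - q)" by (simp add: algebra_simps)
  finally show "norm (G p - G q) \<le> (1 + D + cW * B1 + 2 / a^3) * norm (p - q)" .
qed



locale dsys =
  fixes \<delta> r :: "real \<Rightarrow> real" and \<alpha> :: real and \<omega> :: ereal
  assumes nonneg: "\<forall>x>0. 0 \<le> \<delta> x"
    and bdd: "bounded (\<delta> ` {0<..})"
    and C1: "\<delta> C1_differentiable_on {0<..}"
    and ivl_ne: "ereal \<alpha> < \<omega>"
    and sol: "is_sol \<delta> (ivl \<alpha> \<omega>) r"
begin

definition hh where "hh = (\<lambda>t. (1/2) * (deriv r t)\<^sup>2 - 1 / r t)"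

lemma rpos: "t \<in> ivl \<alpha> \<omega> \<Longrightarrow> 0 < r t"
  and rder: "t \<in> ivl \<alpha> \<omega> \<Longrightarrow> (r has_real_derivative deriv r t) (at t)"
  and vder: "t \<in> ivl \<alpha> \<omega> \<Longrightarrow> (deriv r has_real_derivative (- \<delta> (r t) * deriv r t - 1 / (r t)\<^sup>2)) (at t)"
  using sol by (auto simp: is_sol_def)

lemma Dbound: obtains D where "0 \<le> D" "\<And>x. 0 < x \<Longrightarrow> \<bar>\<delta> x\<bar> \<le> D"
proof -
  obtain D where "\<forall>y\<in>\<delta> ` {0<..}. norm y \<le> D" using bdd by (auto simp: bounded_iff)
  then have "\<And>x. 0 < x \<Longrightarrow> \<bar>\<delta> x\<bar> \<le> D" by auto
  moreover have "0 \<le> D" using calculation[of 1] by linarith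
  ultimately show ?thesis using that by blast
qed

lemma hder: "t \<in> ivl \<alpha> \<omega> \<Longrightarrow> (hh has_real_derivative (- \<delta> (r t) * (deriv r t)\<^sup>2)) (at t)"
proof -
  assume t: "t \<in> ivl \<alpha> \<omega>"
  have "(hh has_real_derivative ((1/2) * (2 * deriv r t * (- \<delta> (r t) * deriv r t - 1 / (r t)\<^sup>2))
       - (- (deriv r t) / (r t)\<^sup>2))) (at t)"
    unfolding hh_def using rpos[OF t] vder[OF t] rder[OF t]
    by (auto intro!: derivative_eq_intros simp: power2_eq_square)
  moreover have "(1/2) * (2 * deriv r t * (- \<delta> (r t) * deriv r t - 1 / (r t)\<^sup>2))
       - (- (deriv r t) / (r t)\<^sup>2) = - \<delta> (r t) * (deriv r t)\<^sup>2"
    by (simp add: algebra_simps power2_eq_square)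
  ultimately show ?thesis by simp
qed

lemma inI: "\<alpha> < t \<Longrightarrow> t \<le> s \<Longrightarrow> s \<in> ivl \<alpha> \<omega> \<Longrightarrow> t \<in> ivl \<alpha> \<omega>"
proof -
  assume "\<alpha> < t" "t \<le> s" "s \<in> ivl \<alpha> \<omega>"
  moreover have "ereal t \<le> ereal s" using \<open>t \<le> s\<close> by simp
  ultimately show ?thesis unfolding ivl_def using order.strict_trans1 by blast
qed

lemma h_anti: "t \<in> ivl \<alpha> \<omega> \<Longrightarrow> s \<in> ivl \<alpha> \<omega> \<Longrightarrow> t \<le> s \<Longrightarrow> hh s \<le> hh t"
proof -
  assume t: "t \<in> ivl \<alpha> \<omega>" and s: "s \<in> ivl \<alpha> \<omega>" and ts: "t \<le> s"
  show "hh s \<le> hh t"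
  proof (rule DERIV_nonpos_imp_nonincreasing[OF ts])
    fix x assume x: "t \<le> x" "x \<le> s"
    then have xI: "x \<in> ivl \<alpha> \<omega>" using t s by (intro inI[of x s]) (auto simp: ivl_def)
    show "\<exists>y. DERIV hh x :> y \<and> y \<le> 0"
      using hder[OF xI] nonneg rpos[OF xI] by (intro exI[of _ "- \<delta> (r x) * (deriv r x)\<^sup>2"]) auto
  qed
qed

lemma r_cont: "{a..b} \<subseteq> ivl \<alpha> \<omega> \<Longrightarrow> continuous_on {a..b} r"
proof (rule DERIV_continuous_on[of _ _ "deriv r"])
  fix x assume "{a..b} \<subseteq> ivl \<alpha> \<omega>" "x \<in> {a..b}"
  then have "x \<in> ivl \<alpha> \<omega>" by blast
  then show "(r has_real_derivative deriv r x) (at x within {a..b})"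
    by (rule has_field_derivative_at_within[OF rder])
qed

lemma crit:
  assumes t: "t \<in> ivl \<alpha> \<omega>" and t0: "t0 \<in> ivl \<alpha> \<omega>" "t \<le> t0" and v0: "deriv r t = 0"
  shows "1 / (\<bar>hh t0\<bar> + 1) < r t"
proof -
  have "hh t0 \<le> hh t" by (rule h_anti[OF t t0])
  then have "1 / r t \<le> \<bar>hh t0\<bar>" using v0 by (simp add: hh_def)
  then have "1 / r t < \<bar>hh t0\<bar> + 1" by linarith
  then have "1 < (\<bar>hh t0\<bar> + 1) * r t" using rpos[OF t] by (simp add: divide_less_eq)
  moreover have "0 < \<bar>hh t0\<bar> + 1" by (simp add: add_nonneg_pos)
  ultimately show ?thesis by (subst pos_divide_less_eq) (simp_all add: mult_ac)
qed

lemma v_cont: "{a..b} \<subseteq> ivl \<alpha> \<omega> \<Longrightarrow> continuous_on {a..b} (deriv r)"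
proof (rule DERIV_continuous_on[of _ _ "\<lambda>t. - \<delta> (r t) * deriv r t - 1 / (r t)\<^sup>2"])
  fix x assume "{a..b} \<subseteq> ivl \<alpha> \<omega>" "x \<in> {a..b}"
  then have "x \<in> ivl \<alpha> \<omega>" by blast
  then show "(deriv r has_real_derivative (- \<delta> (r x) * deriv r x - 1 / (r x)\<^sup>2)) (at x within {a..b})"
    by (rule has_field_derivative_at_within[OF vder])
qed

lemma asym:
  assumes r0: "(r \<longlongrightarrow> 0) (at_right \<alpha>)"
  shows "(\<exists>L. (hh \<longlongrightarrow> L) (at_right \<alpha>)) \<and>
         ((\<lambda>t. r t / (t - \<alpha>) powr (2/3)) \<longlongrightarrow> root 3 (9/2)) (at_right \<alpha>)"
proof -
  obtain t0 where t0: "t0 \<in> ivl \<alpha> \<omega>" using ereal_dense2[OF ivl_ne] by (auto simp: ivl_def)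
  have a0: "\<alpha> < t0" using t0 by (simp add: ivl_def)
  obtain D where D: "0 \<le> D" "\<And>x. 0 < x \<Longrightarrow> \<bar>\<delta> x\<bar> \<le> D" using Dbound by blast
  define c where "c = 1 / (\<bar>hh t0\<bar> + 1)"
  define c2 where "c2 = min c (1 / (2 * \<bar>hh t0\<bar> + 1))"
  have c2: "0 < c2" unfolding c2_def c_def by (simp add: add_nonneg_pos)
  obtain b where b: "\<alpha> < b" "\<And>t. \<alpha> < t \<Longrightarrow> t < b \<Longrightarrow> r t < c2"
  proof -
    have "eventually (\<lambda>t. dist (r t) 0 < c2) (at_right \<alpha>)" using tendstoD[OF r0 c2] .
    then obtain b where "\<alpha> < b" "\<And>t. \<alpha> < t \<Longrightarrow> t < b \<Longrightarrow> dist (r t) 0 < c2"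
      unfolding eventually_at_right_field by blast
    then show ?thesis using that by (metis abs_less_iff dist_real_def diff_zero)
  qed
  define t2 where "t2 = min (min ((\<alpha> + b) / 2) ((\<alpha> + t0) / 2)) (\<alpha> + 1 / (4 * D + 4))"
  have p4: "0 < 1 / (4 * D + 4)" using D by (simp add: add_nonneg_pos)
  have t2a: "t2 \<le> (\<alpha> + b) / 2" "t2 \<le> (\<alpha> + t0) / 2" "t2 \<le> \<alpha> + 1 / (4 * D + 4)"
    unfolding t2_def by linarith+
  have t2: "\<alpha> < t2" "t2 < b" "t2 < t0" "t2 - \<alpha> \<le> 1 / (4 * D + 4)"
    using b a0 p4 t2a by (auto simp: t2_def min_def)
  have I2: "t \<in> ivl \<alpha> \<omega>" if "\<alpha> < t" "t \<le> t2" for t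
    using that t2 t0 by (intro inI[of t t0]) auto
  have rs: "r t < c2" if "\<alpha> < t" "t \<le> t2" for t using b that t2 by auto
  have rp: "0 < r t" if "\<alpha> < t" "t \<le> t2" for t using rpos I2 that by blast
  have vnz: "deriv r t \<noteq> 0" if "\<alpha> < t" "t \<le> t2" for t
  proof
    assume "deriv r t = 0"
    then have "c < r t" unfolding c_def using crit[OF I2[OF that] t0] that t2 by simp
    then show False using rs[OF that] by (simp add: c2_def)
  qed
  have vpos: "0 < deriv r t" if t: "\<alpha> < t" "t \<le> t2" for t
  proof (rule ccontr)
    assume "\<not> 0 < deriv r t"
    then have vt: "deriv r t < 0" using vnz[OF t] by linarith
    have "eventually (\<lambda>s. dist (r s) 0 < r t) (at_right \<alpha>)" using tendstoD[OF r0 rp[OF t]] .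
    then obtain b' where b': "\<alpha> < b'" "\<And>s. \<alpha> < s \<Longrightarrow> s < b' \<Longrightarrow> dist (r s) 0 < r t"
      unfolding eventually_at_right_field by blast
    define s where "s = (\<alpha> + min b' t) / 2"
    have s: "\<alpha> < s" "s < t" "s < b'" using b' t by (auto simp: s_def)
    have rst: "r s < r t" using b'(2)[OF s(1) s(3)] rp[of s] s t by (auto simp: dist_real_def)
    have sub: "{s..t} \<subseteq> ivl \<alpha> \<omega>" using s t I2 by auto
    have "\<exists>z>s. z < t \<and> r t - r s = (t - s) * deriv r z"
      by (rule MVT2) (use s sub rder in auto)
    then obtain z where z: "s < z" "z < t" "r t - r s = (t - s) * deriv r z" by blast
    have "0 < deriv r z" using z rst s by (metis diff_gt_0_iff_gt zero_less_mult_pos)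
    have "{z..t} \<subseteq> ivl \<alpha> \<omega>" using sub z by auto
    then have "\<exists>x. z \<le> x \<and> x \<le> t \<and> deriv r x = 0"
      by (intro IVT2' v_cont) (use vt \<open>0 < deriv r z\<close> z in auto)
    then obtain x where "z \<le> x" "x \<le> t" "deriv r x = 0" by blast
    then show False using vnz[of x] z s t by auto
  qed
  have vsq: "1 / r t \<le> (deriv r t)\<^sup>2" if t: "\<alpha> < t" "t \<le> t2" for t
  proof -
    have "hh t0 \<le> hh t" by (rule h_anti[OF I2[OF t] t0]) (use t t2 in auto)
    then have h1: "- \<bar>hh t0\<bar> \<le> (1/2) * (deriv r t)\<^sup>2 - 1 / r t" by (simp add: hh_def)
    have "r t < 1 / (2 * \<bar>hh t0\<bar> + 1)" using rs[OF t] by (simp add: c2_def)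
    moreover have K: "0 < 2 * \<bar>hh t0\<bar> + 1" by (simp add: add_nonneg_pos)
    ultimately have "r t * (2 * \<bar>hh t0\<bar> + 1) < 1" by (simp add: pos_less_divide_eq)
    then have "(2 * \<bar>hh t0\<bar> + 1) * r t < 1" by (simp only: mult.commute)
    then have "2 * \<bar>hh t0\<bar> + 1 < 1 / r t" using rp[OF t] by (simp add: pos_less_divide_eq)
    then show ?thesis using h1 by linarith
  qed
  have vge: "1 / r t \<le> deriv r t / sqrt (r t)" if t: "\<alpha> < t" "t \<le> t2" for t
  proof -
    have "sqrt (1 / r t) \<le> sqrt ((deriv r t)\<^sup>2)" using vsq[OF t] by (rule real_sqrt_le_mono)
    then have "1 / sqrt (r t) \<le> deriv r t" using vpos[OF t] by (simp add: real_sqrt_divide)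
    then have "(1 / sqrt (r t)) * (1 / sqrt (r t)) \<le> deriv r t * (1 / sqrt (r t))"
      by (rule mult_right_mono) (use rp[OF t] in simp)
    moreover have "(1 / sqrt (r t)) * (1 / sqrt (r t)) = 1 / r t" using rp[OF t]
      by (simp add: real_sqrt_mult[symmetric])
    ultimately show ?thesis by simp
  qed
  have vsq_eq: "(deriv r t)\<^sup>2 = 2 * hh t + 2 / r t" for t by (simp add: hh_def)
  define Hb where "Hb = 2 * \<bar>hh t2\<bar> + 8 * D * sqrt (r t2)"
  have hbd: "hh t \<le> Hb" if t: "\<alpha> < t" "t \<le> t2" for t
  proof -
    define P where "P = max 0 (hh t)"
    define \<psi> where "\<psi> s = hh s + 2 * D * P * s + 4 * D * sqrt (r s)" for s
    have "\<psi> t \<le> \<psi> t2"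
    proof (rule DERIV_nonneg_imp_nondecreasing[OF t(2)])
      fix s assume s: "t \<le> s" "s \<le> t2"
      have s': "\<alpha> < s" using s t by simp
      have sI: "s \<in> ivl \<alpha> \<omega>" using I2 s' s by simp
      have d1: "((\<lambda>s. 2 * D * P * s) has_real_derivative 2 * D * P) (at s)"
        by (auto intro!: derivative_eq_intros)
      have d2: "((\<lambda>z. sqrt (r z)) has_real_derivative inverse (sqrt (r s)) / 2 * deriv r s) (at s)"
        by (rule DERIV_chain2[OF DERIV_real_sqrt[OF rp[OF s' s(2)]] rder[OF sI]])
      have d3: "((\<lambda>z. 4 * D * sqrt (r z)) has_real_derivative 4 * D * (inverse (sqrt (r s)) / 2 * deriv r s)) (at s)"
        by (rule DERIV_cmult[OF d2])
      have der: "(\<psi> has_real_derivative (- \<delta> (r s) * (deriv r s)\<^sup>2 + 2 * D * P * 1 +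
            4 * D * (inverse (sqrt (r s)) / 2 * deriv r s))) (at s)"
        unfolding \<psi>_def[abs_def] using DERIV_add[OF DERIV_add[OF hder[OF sI] d1] d3] by simp
      have hs: "hh s \<le> P" using h_anti[OF I2[OF t] sI s(1)] by (simp add: P_def)
      have "\<delta> (r s) * (deriv r s)\<^sup>2 \<le> D * (deriv r s)\<^sup>2"
        using D(2)[OF rp[OF s' s(2)]] by (intro mult_right_mono) auto
      also have "\<dots> = D * (2 * hh s + 2 / r s)" by (simp add: vsq_eq)
      also have "\<dots> \<le> D * (2 * P + 2 * (deriv r s / sqrt (r s)))"
        using hs vge[OF s' s(2)] D(1) by (intro mult_left_mono) auto
      finally have "\<delta> (r s) * (deriv r s)\<^sup>2 \<le> 2 * D * P + 2 * D * (deriv r s / sqrt (r s))"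
        by (simp add: algebra_simps)
      then have "0 \<le> - \<delta> (r s) * (deriv r s)\<^sup>2 + 2 * D * P * 1 + 4 * D * (inverse (sqrt (r s)) / 2 * deriv r s)"
        by (simp add: field_simps)
      then show "\<exists>y. DERIV \<psi> s :> y \<and> 0 \<le> y" using der by blast
    qed
    then have "hh t \<le> hh t2 + 2 * D * P * (t2 - t) + 4 * D * sqrt (r t2) - 4 * D * sqrt (r t)"
      by (simp add: \<psi>_def algebra_simps)
    moreover have "0 \<le> 4 * D * sqrt (r t)" using D(1) rp[OF t] by simp
    moreover have "2 * D * P * (t2 - t) \<le> P / 2"
    proof -
      have "D * (t2 - t) \<le> D * (1 / (4 * D + 4))" using t t2 D(1) by (intro mult_left_mono) auto
      also have "\<dots> \<le> 1/4" using D(1) by (simp add: field_simps)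
      finally have "D * (t2 - t) \<le> 1/4" .
      moreover have "0 \<le> P" unfolding P_def by simp
      ultimately have "P * (D * (t2 - t)) \<le> P * (1/4)" by (intro mult_left_mono)
      then show ?thesis by (simp add: algebra_simps)
    qed
    moreover have "0 \<le> D * sqrt (r t2)" using D(1) rp[of t2] t2 by simp
    ultimately have A: "hh t \<le> hh t2 + P / 2 + 4 * (D * sqrt (r t2))" by (simp add: algebra_simps)
    have B: "0 \<le> D * sqrt (r t2)" using D(1) rp[of t2] t2 by simp
    show ?thesis
    proof (cases "0 \<le> hh t")
      case True
      then have "P = hh t" by (simp add: P_def)
      then show ?thesis using A B unfolding Hb_def by (simp add: algebra_simps)
    next
      case False
      then show ?thesis using B unfolding Hb_def by (simp add: algebra_simps)
    qed
  qed
  obtain L where L: "(hh \<longlongrightarrow> L) (at_right \<alpha>)"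
    using antimono_limit_right[of \<alpha> t2 hh Hb] t2 h_anti I2 hbd by force
  have ev: "eventually (\<lambda>t. \<alpha> < t \<and> t < t2) (at_right \<alpha>)"
    unfolding eventually_at_right_field using t2 by blast
  have "((\<lambda>t. 2 * hh t * r t + 2) \<longlongrightarrow> 2 * L * 0 + 2) (at_right \<alpha>)"
    by (intro tendsto_intros L r0)
  then have w: "((\<lambda>t. (deriv r t)\<^sup>2 * r t) \<longlongrightarrow> 2) (at_right \<alpha>)"
  proof (subst tendsto_cong)
    show "\<forall>\<^sub>F t in at_right \<alpha>. (deriv r t)\<^sup>2 * r t = 2 * hh t * r t + 2"
      using ev
    proof eventually_elim
      case (elim t)
      then have "0 < r t" using rp by simp
      then show ?case by (simp add: vsq_eq field_simps)
    qed
  qed simp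
  have w2: "((\<lambda>t. 3/2 * (sqrt (r t) * deriv r t)) \<longlongrightarrow> 3/2 * sqrt 2) (at_right \<alpha>)"
  proof -
    have "((\<lambda>t. 3/2 * sqrt ((deriv r t)\<^sup>2 * r t)) \<longlongrightarrow> 3/2 * sqrt 2) (at_right \<alpha>)"
      by (intro tendsto_intros w)
    moreover have "\<forall>\<^sub>F t in at_right \<alpha>. 3/2 * sqrt ((deriv r t)\<^sup>2 * r t) = 3/2 * (sqrt (r t) * deriv r t)"
      using ev
    proof eventually_elim
      case (elim t)
      then have "0 < deriv r t" using vpos by simp
      then show ?case by (simp add: real_sqrt_mult)
    qed
    ultimately show ?thesis using tendsto_cong by fastforce
  qed
  define q where "q t = r t * sqrt (r t)" for t
  have q0: "(q \<longlongrightarrow> 0) (at_right \<alpha>)"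
  proof -
    have "((\<lambda>t. r t * sqrt (r t)) \<longlongrightarrow> 0 * sqrt 0) (at_right \<alpha>)" by (intro tendsto_intros r0)
    then show ?thesis by (simp add: q_def[abs_def])
  qed
  have qlim: "((\<lambda>t. q t / (t - \<alpha>)) \<longlongrightarrow> 3/2 * sqrt 2) (at_right \<alpha>)"
  proof (rule lhopital_right[OF q0, where g' = "\<lambda>t. 1" and f' = "\<lambda>t. 3/2 * (sqrt (r t) * deriv r t)"])
    show "((\<lambda>t. t - \<alpha>) \<longlongrightarrow> 0) (at_right \<alpha>)"
      by (rule tendsto_eq_intros | simp)+
    show "\<forall>\<^sub>F t in at_right \<alpha>. t - \<alpha> \<noteq> 0" using ev by eventually_elim auto
    show "\<forall>\<^sub>F t in at_right \<alpha>. (1::real) \<noteq> 0" by simp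
    show "\<forall>\<^sub>F t in at_right \<alpha>. ((\<lambda>t. t - \<alpha>) has_real_derivative 1) (at t)"
      by (intro always_eventually allI) (auto intro!: derivative_eq_intros)
    show "\<forall>\<^sub>F t in at_right \<alpha>. (q has_real_derivative 3/2 * (sqrt (r t) * deriv r t)) (at t)"
      using ev
    proof eventually_elim
      case (elim t)
      then have tI: "t \<in> ivl \<alpha> \<omega>" and rt: "0 < r t" using I2 rp by auto
      have "(q has_real_derivative (deriv r t * sqrt (r t) + (inverse (sqrt (r t)) / 2 * deriv r t) * r t)) (at t)"
        unfolding q_def[abs_def]
        by (rule DERIV_mult[OF rder[OF tI] DERIV_chain2[OF DERIV_real_sqrt[OF rt] rder[OF tI]]])
      moreover have "deriv r t * sqrt (r t) + (inverse (sqrt (r t)) / 2 * deriv r t) * r t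
          = 3/2 * (sqrt (r t) * deriv r t)"
      proof -
        have "r t * inverse (sqrt (r t)) = sqrt (r t)" using rt
          by (metis less_eq_real_def real_div_sqrt divide_inverse)
        then show ?thesis by (simp add: algebra_simps)
      qed
      ultimately show ?case by (rule DERIV_cong)
    qed
    show "((\<lambda>t. 3/2 * (sqrt (r t) * deriv r t) / 1) \<longlongrightarrow> 3/2 * sqrt 2) (at_right \<alpha>)"
      using w2 by simp
  qed
  have lim2: "((\<lambda>t. (q t / (t - \<alpha>)) powr (2/3)) \<longlongrightarrow> (3/2 * sqrt 2) powr (2/3)) (at_right \<alpha>)"
    by (rule tendsto_powr[OF qlim tendsto_const]) simp
  have const: "(3/2 * sqrt 2) powr (2/3) = root 3 (9/2)"
  proof -
    have "(3/2 * sqrt 2 :: real) powr (2/3) = ((3/2 * sqrt 2) powr 2) powr (1/3)" by (subst powr_powr) simp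
    also have "(3/2 * sqrt 2 :: real) powr 2 = (3/2 * sqrt 2)^2" using powr_realpow[of "3/2 * sqrt 2" 2] by simp
    also have "\<dots> = 9/2" by (simp add: power_mult_distrib power_divide)
    finally show ?thesis by (simp add: root_powr_inverse)
  qed
  have "((\<lambda>t. r t / (t - \<alpha>) powr (2/3)) \<longlongrightarrow> root 3 (9/2)) (at_right \<alpha>)"
  proof -
    have "\<forall>\<^sub>F t in at_right \<alpha>. (q t / (t - \<alpha>)) powr (2/3) = r t / (t - \<alpha>) powr (2/3)"
      using ev
    proof eventually_elim
      case (elim t)
      then have rt: "0 < r t" using rp by auto
      have "r t powr (3/2) = r t powr (1 + 1/2)" by simp
      also have "\<dots> = r t powr 1 * r t powr (1/2)" by (rule powr_add)
      also have "\<dots> = q t" using rt by (simp add: powr_half_sqrt q_def)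
      finally have "q t = r t powr (3/2)" by simp
      then have "q t powr (2/3) = r t" using rt by (simp add: powr_powr)
      then show ?case by (simp add: powr_divide)
    qed
    then show ?thesis using lim2 const tendsto_cong by fastforce
  qed
  with L show ?thesis by blast
qed
lemma delta_props:
  obtains \<delta>' where "\<And>x. 0 < x \<Longrightarrow> (\<delta> has_real_derivative \<delta>' x) (at x)" "continuous_on {0<..} \<delta>'"
  using C1 unfolding C1_differentiable_on_def has_real_derivative_iff_has_vector_derivative by auto

lemma delta_cont: "0 < x \<Longrightarrow> isCont \<delta> x"
  by (metis DERIV_isCont delta_props)

lemma delta_lip:
  assumes a: "0 < a" "a \<le> bR"
  obtains B1 where "0 \<le> B1"
    "\<And>x y. a \<le> x \<Longrightarrow> x \<le> bR \<Longrightarrow> a \<le> y \<Longrightarrow> y \<le> bR \<Longrightarrow> \<bar>\<delta> x - \<delta> y\<bar> \<le> B1 * \<bar>x - y\<bar>"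
proof -
  obtain \<delta>' where d: "\<And>x. 0 < x \<Longrightarrow> (\<delta> has_real_derivative \<delta>' x) (at x)" "continuous_on {0<..} \<delta>'"
    using delta_props by blast
  have "continuous_on {a..bR} \<delta>'" by (rule continuous_on_subset[OF d(2)]) (use a in auto)
  then have "compact (\<delta>' ` {a..bR})" by (intro compact_continuous_image) auto
  then obtain B where B: "\<forall>y\<in>\<delta>' ` {a..bR}. norm y \<le> B" using compact_imp_bounded bounded_iff by metis
  show ?thesis
  proof (rule that[of "max 0 B"])
    fix x y assume xy: "a \<le> x" "x \<le> bR" "a \<le> y" "y \<le> bR"
    show "\<bar>\<delta> x - \<delta> y\<bar> \<le> max 0 B * \<bar>x - y\<bar>"
    proof (rule lip_deriv[where f' = \<delta>' and a = a and b = bR])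
      fix z assume z: "a \<le> z" "z \<le> bR"
      then show "(\<delta> has_real_derivative \<delta>' z) (at z)" using d(1)[of z] a by auto
      have "\<bar>\<delta>' z\<bar> \<le> B" using B z by auto
      then show "\<bar>\<delta>' z\<bar> \<le> max 0 B" by simp
    qed (use xy in auto)
  qed simp
qed

lemma ext_lemma:
  assumes rl: "(r \<longlongrightarrow> r0) (at_right \<alpha>)" and vl: "(deriv r \<longlongrightarrow> v0) (at_right \<alpha>)" and r0: "0 < r0"
  shows "\<exists>b s. b < \<alpha> \<and> is_sol \<delta> (ivl b \<omega>) s \<and> (\<forall>t\<in>ivl \<alpha> \<omega>. s t = r t)"
proof -
  obtain t0 where t0: "t0 \<in> ivl \<alpha> \<omega>" using ereal_dense2[OF ivl_ne] by (auto simp: ivl_def)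
  have a0: "\<alpha> < t0" using t0 by (simp add: ivl_def)
  obtain D where D: "0 \<le> D" "\<And>x. 0 < x \<Longrightarrow> \<bar>\<delta> x\<bar> \<le> D" using Dbound by blast
  define a where "a = r0 / 2"
  define bR where "bR = 2 * r0"
  define cW where "cW = \<bar>v0\<bar> + 1"
  have a: "0 < a" "a \<le> bR" using r0 by (auto simp: a_def bR_def)
  have cW: "0 \<le> cW" by (simp add: cW_def)
  obtain B1 where B1: "0 \<le> B1"
    "\<And>x y. a \<le> x \<Longrightarrow> x \<le> bR \<Longrightarrow> a \<le> y \<Longrightarrow> y \<le> bR \<Longrightarrow> \<bar>\<delta> x - \<delta> y\<bar> \<le> B1 * \<bar>x - y\<bar>"
    using delta_lip[OF a] by blast
  define G where "G \<equiv> \<lambda>p::real\<times>real. (- (max (-cW) (min cW (snd p))),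
      \<delta> (max a (min bR (fst p))) * max (-cW) (min cW (snd p)) + 1 / (max a (min bR (fst p)))\<^sup>2)"
  define M where "M = cW + D * cW + 1 / a\<^sup>2"
  define Lc where "Lc = 1 + D + cW * B1 + 2 / a^3"
  have Dd: "\<And>x. a \<le> x \<Longrightarrow> x \<le> bR \<Longrightarrow> \<bar>\<delta> x\<bar> \<le> D" using D a by auto
  have GM: "norm (G p) \<le> M" for p
    unfolding M_def G_def by (rule G_props(1)[OF a cW Dd B1(2) B1(1) D(1)])
  have GL: "norm (G p - G q) \<le> Lc * norm (p - q)" for p q
    unfolding Lc_def G_def by (rule G_props(2)[OF a cW Dd B1(2) B1(1) D(1)])
  have M0: "0 \<le> M" using GM[of 0] norm_ge_zero order_trans by blast
  have Lc: "0 < Lc" unfolding Lc_def using D B1 cW a by (auto intro!: add_pos_nonneg)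
  define \<eta> where "\<eta> = min (1 / (2 * Lc)) (min (a / (M + 1)) (1 / (M + 1)))"
  have eta: "0 < \<eta>" using Lc M0 a by (auto simp: \<eta>_def)
  have etaL: "\<eta> * Lc \<le> 1/2"
  proof -
    have "\<eta> * Lc \<le> 1 / (2 * Lc) * Lc" using Lc by (intro mult_right_mono) (auto simp: \<eta>_def)
    then show ?thesis using Lc by simp
  qed
  have etaM: "M * \<eta> \<le> a" "M * \<eta> \<le> 1"
  proof -
    have "M * \<eta> \<le> (M + 1) * \<eta>" using eta by (intro mult_right_mono) auto
    also have "\<dots> \<le> (M + 1) * (a / (M + 1))" using M0 by (intro mult_left_mono) (auto simp: \<eta>_def)
    also have "\<dots> = a" using M0 by simp
    finally show "M * \<eta> \<le> a" .
    have "M * \<eta> \<le> (M + 1) * \<eta>" using eta by (intro mult_right_mono) auto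
    also have "\<dots> \<le> (M + 1) * (1 / (M + 1))" using M0 by (intro mult_left_mono) (auto simp: \<eta>_def)
    also have "\<dots> = 1" using M0 by simp
    finally show "M * \<eta> \<le> 1" .
  qed
  obtain y where y0: "y 0 = (r0, v0)" and yd: "\<And>\<tau>. \<tau> \<in> {0..\<eta>} \<Longrightarrow>
      (y has_vector_derivative G (y \<tau>)) (at \<tau> within {0..\<eta>}) \<and> norm (y \<tau> - (r0, v0)) \<le> M * \<tau>"
    using ode_exist[of G M Lc \<eta> "(r0, v0)", OF GM GL] Lc eta etaL by auto
  define R where "R \<tau> = fst (y \<tau>)" for \<tau>
  define W where "W \<tau> = snd (y \<tau>)" for \<tau>
  have box: "a \<le> R \<tau> \<and> R \<tau> \<le> bR \<and> \<bar>W \<tau>\<bar> \<le> cW" if t: "\<tau> \<in> {0..\<eta>}" for \<tau>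
  proof -
    have n: "norm (y \<tau> - (r0, v0)) \<le> M * \<eta>"
      using yd[OF t] M0 t by (meson atLeastAtMost_iff mult_left_mono order_trans)
    have "dist (fst (y \<tau>)) (fst (r0, v0)) \<le> dist (y \<tau>) (r0, v0)" by (rule dist_fst_le)
    then have "\<bar>R \<tau> - r0\<bar> \<le> a" using n etaM by (simp add: R_def dist_norm dist_real_def)
    moreover have "dist (snd (y \<tau>)) (snd (r0, v0)) \<le> dist (y \<tau>) (r0, v0)" by (rule dist_snd_le)
    then have "\<bar>W \<tau> - v0\<bar> \<le> 1" using n etaM by (simp add: W_def dist_norm dist_real_def)
    ultimately show ?thesis unfolding a_def bR_def cW_def using r0 by arith
  qed
  have Gy: "G (y \<tau>) = (- W \<tau>, \<delta> (R \<tau>) * W \<tau> + 1 / (R \<tau>)\<^sup>2)" if t: "\<tau> \<in> {0..\<eta>}" for \<tau>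
  proof -
    have "max (-cW) (min cW (W \<tau>)) = W \<tau>" using box[OF t] by (intro clamp_id) auto
    moreover have "max a (min bR (R \<tau>)) = R \<tau>" using box[OF t] by (intro clamp_id) auto
    ultimately show ?thesis by (simp add: G_def R_def W_def)
  qed
  have Rd: "(R has_real_derivative - W \<tau>) (at \<tau> within {0..\<eta>})" if t: "\<tau> \<in> {0..\<eta>}" for \<tau>
    using vd_fst[OF conjunct1[OF yd[OF t]]] Gy[OF t] by (simp add: R_def[abs_def])
  have Wd: "(W has_real_derivative \<delta> (R \<tau>) * W \<tau> + 1 / (R \<tau>)\<^sup>2) (at \<tau> within {0..\<eta>})" if t: "\<tau> \<in> {0..\<eta>}" for \<tau>
    using vd_snd[OF conjunct1[OF yd[OF t]]] Gy[OF t] by (simp add: W_def[abs_def])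
  have R0: "R 0 = r0" and W0: "W 0 = v0" using y0 by (auto simp: R_def W_def)
  have Rc: "continuous_on {0..\<eta>} R" by (rule DERIV_continuous_on[OF Rd])
  have Wc: "continuous_on {0..\<eta>} W" by (rule DERIV_continuous_on[OF Wd])
  have Rdi: "(R has_real_derivative - W \<tau>) (at \<tau>)" if "0 < \<tau>" "\<tau> < \<eta>" for \<tau>
    using Rd[of \<tau>] that at_within_Icc_at[of 0 \<tau> \<eta>] by auto
  have Wdi: "(W has_real_derivative \<delta> (R \<tau>) * W \<tau> + 1 / (R \<tau>)\<^sup>2) (at \<tau>)" if "0 < \<tau>" "\<tau> < \<eta>" for \<tau>
    using Wd[of \<tau>] that at_within_Icc_at[of 0 \<tau> \<eta>] by auto
  have Rpos: "0 < R \<tau>" if "\<tau> \<in> {0..\<eta>}" for \<tau> using box[OF that] a by linarith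
  define s where "s t = (if t \<le> \<alpha> then R (\<alpha> - t) else r t)" for t
  have sa: "s \<alpha> = r0" by (simp add: s_def R0)
    have mdi: "((\<lambda>x. \<alpha> - x) has_real_derivative -1) (at x)" for x
    by (auto intro!: derivative_eq_intros)
  have sLd: "(s has_real_derivative W (\<alpha> - x)) (at x)" and dsL: "deriv s x = W (\<alpha> - x)"
    and dsLd: "(deriv s has_real_derivative (- \<delta> (s x) * deriv s x - 1 / (s x)\<^sup>2)) (at x)"
    if x: "\<alpha> - \<eta> < x" "x < \<alpha>" for x
  proof -
    have U: "open {\<alpha> - \<eta><..<\<alpha>}" by simp
    have sU: "s z = R (\<alpha> - z)" if "z \<in> {\<alpha> - \<eta><..<\<alpha>}" for z using that by (simp add: s_def)
    have d1: "((\<lambda>z. R (\<alpha> - z)) has_real_derivative W (\<alpha> - z)) (at z)" if "z \<in> {\<alpha> - \<eta><..<\<alpha>}" for z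
      using DERIV_chain2[OF Rdi[of "\<alpha> - z"] mdi[of z]] that by simp
    have sd: "(s has_real_derivative W (\<alpha> - z)) (at z)" if "z \<in> {\<alpha> - \<eta><..<\<alpha>}" for z
      by (rule has_field_derivative_transform_within_open[OF d1[OF that] U that]) (simp add: sU)
    then show "(s has_real_derivative W (\<alpha> - x)) (at x)" using x by simp
    have ds: "deriv s z = W (\<alpha> - z)" if "z \<in> {\<alpha> - \<eta><..<\<alpha>}" for z using DERIV_imp_deriv[OF sd[OF that]] .
    then show "deriv s x = W (\<alpha> - x)" using x by simp
    have d2: "((\<lambda>z. W (\<alpha> - z)) has_real_derivative (\<delta> (R (\<alpha> - x)) * W (\<alpha> - x) + 1 / (R (\<alpha> - x))\<^sup>2) * -1) (at x)"
      using DERIV_chain2[OF Wdi[of "\<alpha> - x"] mdi[of x]] x by simp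
    have "(deriv s has_real_derivative (\<delta> (R (\<alpha> - x)) * W (\<alpha> - x) + 1 / (R (\<alpha> - x))\<^sup>2) * -1) (at x)"
      by (rule has_field_derivative_transform_within_open[OF d2 U]) (use x ds in auto)
    then show "(deriv s has_real_derivative (- \<delta> (s x) * deriv s x - 1 / (s x)\<^sup>2)) (at x)"
      using x ds[of x] sU[of x] by (simp add: algebra_simps)
  qed
    have sRd: "(s has_real_derivative deriv r x) (at x)" and dsR: "deriv s x = deriv r x"
    and dsRd: "(deriv s has_real_derivative (- \<delta> (s x) * deriv s x - 1 / (s x)\<^sup>2)) (at x)"
    if x: "x \<in> ivl \<alpha> \<omega>" for x
  proof -
    obtain t' where t': "x < t'" "ereal t' < \<omega>" using ereal_dense2[of x \<omega>] x by (auto simp: ivl_def)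
    have U: "open {\<alpha><..<t'}" by simp
    have xU: "x \<in> {\<alpha><..<t'}" using x t' by (auto simp: ivl_def)
    have UI: "z \<in> ivl \<alpha> \<omega>" if "z \<in> {\<alpha><..<t'}" for z
      using that t' by (auto simp: ivl_def intro: order.strict_trans[of "ereal z" "ereal t'"])
    have sU: "r z = s z" if "z \<in> {\<alpha><..<t'}" for z using that by (simp add: s_def)
    have sd: "(s has_real_derivative deriv r z) (at z)" if "z \<in> {\<alpha><..<t'}" for z
      by (rule has_field_derivative_transform_within_open[OF rder[OF UI[OF that]] U that sU])
    then show "(s has_real_derivative deriv r x) (at x)" using xU by simp
    have ds: "deriv r z = deriv s z" if "z \<in> {\<alpha><..<t'}" for z using DERIV_imp_deriv[OF sd[OF that]] by simp
    then show "deriv s x = deriv r x" using xU by simp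
    have "(deriv s has_real_derivative (- \<delta> (r x) * deriv r x - 1 / (r x)\<^sup>2)) (at x)"
      by (rule has_field_derivative_transform_within_open[OF vder[OF x] U xU ds])
    then show "(deriv s has_real_derivative (- \<delta> (s x) * deriv s x - 1 / (s x)\<^sup>2)) (at x)"
      using sU[OF xU] ds[OF xU] by simp
  qed
  have cL: "continuous_on {\<alpha> - \<eta>..\<alpha>} (\<lambda>x. f (\<alpha> - x))" if "continuous_on {0..\<eta>} f" for f :: "real \<Rightarrow> real"
    by (rule continuous_on_compose2[OF that]) (auto intro!: continuous_intros)
  have ae: "\<alpha> - \<eta> < \<alpha>" using eta by simp
  have RL: "((\<lambda>x. R (\<alpha> - x)) \<longlongrightarrow> r0) (at_left \<alpha>)"
    using continuous_on_Icc_at_leftD[OF cL[OF Rc] ae] R0 by simp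
  have WL: "((\<lambda>x. W (\<alpha> - x)) \<longlongrightarrow> v0) (at_left \<alpha>)"
    using continuous_on_Icc_at_leftD[OF cL[OF Wc] ae] W0 by simp
  have evL: "eventually (\<lambda>x. \<alpha> - \<eta> < x \<and> x < \<alpha>) (at_left \<alpha>)"
    unfolding eventually_at_left_field using ae by blast
  have evR: "eventually (\<lambda>x. \<alpha> < x \<and> x < t0) (at_right \<alpha>)"
    unfolding eventually_at_right_field using a0 by blast
  have inR: "x \<in> ivl \<alpha> \<omega>" if "\<alpha> < x" "x < t0" for x using inI[of x t0] that t0 by simp
  have sda: "(s has_real_derivative v0) (at \<alpha>)"
  proof -
    have "((\<lambda>x. (s x - s \<alpha>) / (x - \<alpha>)) \<longlongrightarrow> v0) (at \<alpha>)"
      unfolding filterlim_at_split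
    proof
      have lim: "((\<lambda>x. (R (\<alpha> - x) - r0) / (x - \<alpha>)) \<longlongrightarrow> v0) (at_left \<alpha>)"
        by (rule deriv_limit_left[OF ae _ RL WL])
           (use DERIV_chain2[OF Rdi mdi] in \<open>auto\<close>)
      moreover have ev: "eventually (\<lambda>x. (R (\<alpha> - x) - r0) / (x - \<alpha>) = (s x - s \<alpha>) / (x - \<alpha>)) (at_left \<alpha>)"
        using evL by eventually_elim (simp add: s_def sa R0)
      ultimately show "((\<lambda>x. (s x - s \<alpha>) / (x - \<alpha>)) \<longlongrightarrow> v0) (at_left \<alpha>)"
        using tendsto_cong[THEN iffD1, OF ev lim] by simp
    next
      have lim: "((\<lambda>x. (r x - r0) / (x - \<alpha>)) \<longlongrightarrow> v0) (at_right \<alpha>)"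
        by (rule deriv_limit_right[OF a0 _ rl vl]) (use rder inR in auto)
      moreover have ev: "eventually (\<lambda>x. (r x - r0) / (x - \<alpha>) = (s x - s \<alpha>) / (x - \<alpha>)) (at_right \<alpha>)"
        using evR by eventually_elim (simp add: s_def R0)
      ultimately show "((\<lambda>x. (s x - s \<alpha>) / (x - \<alpha>)) \<longlongrightarrow> v0) (at_right \<alpha>)"
        using tendsto_cong[THEN iffD1, OF ev lim] by simp
    qed
    then show ?thesis by (simp add: has_field_derivative_iff)
  qed
  have dsa: "deriv s \<alpha> = v0" using DERIV_imp_deriv[OF sda] .
  have dlim: "((\<lambda>t. \<delta> (r t)) \<longlongrightarrow> \<delta> r0) (at_right \<alpha>)"
    by (rule isCont_tendsto_compose[OF delta_cont[OF r0] rl])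
  have dlimL: "((\<lambda>x. \<delta> (R (\<alpha> - x))) \<longlongrightarrow> \<delta> r0) (at_left \<alpha>)"
    by (rule isCont_tendsto_compose[OF delta_cont[OF r0] RL])
  have dsda: "(deriv s has_real_derivative (- \<delta> (s \<alpha>) * deriv s \<alpha> - 1 / (s \<alpha>)\<^sup>2)) (at \<alpha>)"
  proof -
    have "((\<lambda>x. (deriv s x - deriv s \<alpha>) / (x - \<alpha>)) \<longlongrightarrow> - \<delta> r0 * v0 - 1 / r0\<^sup>2) (at \<alpha>)"
      unfolding filterlim_at_split
    proof
      have lim: "((\<lambda>x. (W (\<alpha> - x) - v0) / (x - \<alpha>)) \<longlongrightarrow> (\<delta> r0 * v0 + 1 / r0\<^sup>2) * -1) (at_left \<alpha>)"
      proof (rule deriv_limit_left[OF ae _ WL])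
        show "((\<lambda>x. (\<delta> (R (\<alpha> - x)) * W (\<alpha> - x) + 1 / (R (\<alpha> - x))\<^sup>2) * -1) \<longlongrightarrow>
            (\<delta> r0 * v0 + 1 / r0\<^sup>2) * -1) (at_left \<alpha>)"
          using r0 by (intro tendsto_intros dlimL WL RL) auto
      qed (use DERIV_chain2[OF Wdi mdi] in \<open>auto\<close>)
      moreover have ev: "eventually (\<lambda>x. (W (\<alpha> - x) - v0) / (x - \<alpha>) = (deriv s x - deriv s \<alpha>) / (x - \<alpha>)) (at_left \<alpha>)"
        using evL by eventually_elim (simp add: dsL dsa)
      ultimately show "((\<lambda>x. (deriv s x - deriv s \<alpha>) / (x - \<alpha>)) \<longlongrightarrow> - \<delta> r0 * v0 - 1 / r0\<^sup>2) (at_left \<alpha>)"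
        using tendsto_cong[THEN iffD1, OF ev lim] by simp
    next
      have lim: "((\<lambda>x. (deriv r x - v0) / (x - \<alpha>)) \<longlongrightarrow> - \<delta> r0 * v0 - 1 / r0\<^sup>2) (at_right \<alpha>)"
      proof (rule deriv_limit_right[OF a0 _ vl])
        show "((\<lambda>t. - \<delta> (r t) * deriv r t - 1 / (r t)\<^sup>2) \<longlongrightarrow> - \<delta> r0 * v0 - 1 / r0\<^sup>2) (at_right \<alpha>)"
          using r0 by (intro tendsto_intros dlim vl rl) auto
      qed (use vder inR in auto)
      moreover have ev: "eventually (\<lambda>x. (deriv r x - v0) / (x - \<alpha>) = (deriv s x - deriv s \<alpha>) / (x - \<alpha>)) (at_right \<alpha>)"
        using evR by eventually_elim (simp add: dsR inR dsa)
      ultimately show "((\<lambda>x. (deriv s x - deriv s \<alpha>) / (x - \<alpha>)) \<longlongrightarrow> - \<delta> r0 * v0 - 1 / r0\<^sup>2) (at_right \<alpha>)"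
        using tendsto_cong[THEN iffD1, OF ev lim] by simp
    qed
    then show ?thesis by (simp add: has_field_derivative_iff sa dsa)
  qed
  have sol_s: "is_sol \<delta> (ivl (\<alpha> - \<eta>) \<omega>) s"
    unfolding is_sol_def
  proof
    fix t assume t: "t \<in> ivl (\<alpha> - \<eta>) \<omega>"
    consider "t < \<alpha>" | "t = \<alpha>" | "\<alpha> < t" by linarith
    then show "0 < s t \<and> (s has_real_derivative deriv s t) (at t) \<and>
        (deriv s has_real_derivative (- \<delta> (s t) * deriv s t - 1 / (s t)\<^sup>2)) (at t)"
    proof cases
      case 1
      have x: "\<alpha> - \<eta> < t" using t by (simp add: ivl_def)
      have "0 < s t" using Rpos[of "\<alpha> - t"] 1 x by (simp add: s_def)
      then show ?thesis using sLd[OF x 1] dsL[OF x 1] dsLd[OF x 1] by simp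
    next
      case 2
      then show ?thesis using sda dsa dsda r0 sa by simp
    next
      case 3
      then have x: "t \<in> ivl \<alpha> \<omega>" using t by (simp add: ivl_def)
      then show ?thesis using sRd[OF x] dsR[OF x] dsRd[OF x] rpos[OF x] 3 by (simp add: s_def)
    qed
  qed
  show ?thesis
  proof (intro exI conjI)
    show "\<alpha> - \<eta> < \<alpha>" by (rule ae)
    show "is_sol \<delta> (ivl (\<alpha> - \<eta>) \<omega>) s" by (rule sol_s)
    show "\<forall>t\<in>ivl \<alpha> \<omega>. s t = r t" by (auto simp: s_def ivl_def)
  qed
qed

lemma caseA:
  assumes e: "0 < e" and t1: "\<alpha> < t1" and ge: "\<And>t. \<alpha> < t \<Longrightarrow> t < t1 \<Longrightarrow> e \<le> r t"
  shows "\<exists>b s. b < \<alpha> \<and> is_sol \<delta> (ivl b \<omega>) s \<and> (\<forall>t\<in>ivl \<alpha> \<omega>. s t = r t)"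
proof -
  obtain t0 where t0: "t0 \<in> ivl \<alpha> \<omega>" using ereal_dense2[OF ivl_ne] by (auto simp: ivl_def)
  have a0: "\<alpha> < t0" using t0 by (simp add: ivl_def)
  obtain D where D: "0 \<le> D" "\<And>x. 0 < x \<Longrightarrow> \<bar>\<delta> x\<bar> \<le> D" using Dbound by blast
  have p4: "0 < 1 / (4 * D + 4)" using D by (simp add: add_nonneg_pos)
  define T where "T = min (min t1 t0) (\<alpha> + 1 / (4 * D + 4))"
  have Ta: "T \<le> t1" "T \<le> t0" "T \<le> \<alpha> + 1 / (4 * D + 4)" unfolding T_def by linarith+
  have aT: "\<alpha> < T" using t1 a0 p4 by (simp add: T_def)
  define T2 where "T2 = (\<alpha> + T) / 2"
  have T2: "\<alpha> < T2" "T2 < T" "T2 < t1" "T2 < t0" "T2 - \<alpha> \<le> 1 / (4 * D + 4)"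
    using aT Ta by (auto simp: T2_def)
  have I2: "t \<in> ivl \<alpha> \<omega>" if "\<alpha> < t" "t \<le> T2" for t
    using that T2 t0 by (intro inI[of t t0]) auto
  have rge: "e \<le> r t" if "\<alpha> < t" "t \<le> T2" for t using ge that T2 by auto
  have vsq_eq: "(deriv r t)\<^sup>2 = 2 * hh t + 2 / r t" for t by (simp add: hh_def)
  have inv_le: "1 / r t \<le> 1 / e" if "\<alpha> < t" "t \<le> T2" for t
    using rge[OF that] e by (intro divide_left_mono) auto
  define H where "H = 2 * \<bar>hh T2\<bar> + 1 / e"
  have hb: "hh t \<le> H" if t: "\<alpha> < t" "t \<le> T2" for t
  proof -
    define P where "P = max 0 (hh t)"
    define K where "K = D * (2 * P + 2 / e)"
    define \<psi> where "\<psi> s = hh s + K * s" for s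
    have "\<psi> t \<le> \<psi> T2"
    proof (rule DERIV_nonneg_imp_nondecreasing[OF t(2)])
      fix s assume s: "t \<le> s" "s \<le> T2"
      have s': "\<alpha> < s" using s t by simp
      have sI: "s \<in> ivl \<alpha> \<omega>" using I2 s' s by simp
      have der: "(\<psi> has_real_derivative (- \<delta> (r s) * (deriv r s)\<^sup>2 + K)) (at s)"
      proof -
        have "((\<lambda>s. K * s) has_real_derivative K) (at s)" by (auto intro!: derivative_eq_intros)
        from DERIV_add[OF hder[OF sI] this] show ?thesis unfolding \<psi>_def[abs_def] by simp
      qed
      have hs: "hh s \<le> P" using h_anti[OF I2[OF t] sI s(1)] by (simp add: P_def)
      have "\<delta> (r s) * (deriv r s)\<^sup>2 \<le> D * (deriv r s)\<^sup>2"
        using D(2)[OF rpos[OF sI]] by (intro mult_right_mono) auto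
      also have "\<dots> = D * (2 * hh s + 2 / r s)" by (simp add: vsq_eq)
      also have "\<dots> \<le> K"
        unfolding K_def using hs inv_le[OF s' s(2)] D(1) by (intro mult_left_mono) auto
      finally have "0 \<le> - \<delta> (r s) * (deriv r s)\<^sup>2 + K" by simp
      then show "\<exists>y. DERIV \<psi> s :> y \<and> 0 \<le> y" using der by blast
    qed
    then have A: "hh t \<le> hh T2 + K * (T2 - t)" by (simp add: \<psi>_def algebra_simps)
    have "D * (T2 - t) \<le> D * (1 / (4 * D + 4))" using t T2 D(1) by (intro mult_left_mono) auto
    also have "\<dots> \<le> 1/4" using D(1) by (simp add: field_simps)
    finally have "D * (T2 - t) \<le> 1/4" .
    moreover have "0 \<le> 2 * P + 2 / e" using e by (simp add: P_def)
    ultimately have le4: "(2 * P + 2 / e) * (D * (T2 - t)) \<le> (2 * P + 2 / e) * (1/4)" by (intro mult_left_mono)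
    have "K * (T2 - t) = (2 * P + 2 / e) * (D * (T2 - t))" unfolding K_def by (simp add: field_simps)
    also have "\<dots> \<le> (2 * P + 2 / e) * (1/4)" by (rule le4)
    also have "\<dots> = P / 2 + 1 / (2 * e)" by (simp add: field_simps)
    finally have "K * (T2 - t) \<le> P / 2 + 1 / (2 * e)" .
    with A have B: "hh t \<le> hh T2 + P / 2 + 1 / (2 * e)" by simp
    have e2: "1 / (2 * e) = (1 / e) / 2" by simp
    show ?thesis
    proof (cases "0 \<le> hh t")
      case True
      then have "P = hh t" by (simp add: P_def)
      then show ?thesis using B e2 e unfolding H_def by (simp add: algebra_simps)
    next
      case False
      then show ?thesis using e unfolding H_def by (simp add: algebra_simps) (smt (verit) abs_ge_zero divide_pos_pos)
    qed
  qed
  define V where "V = 2 * H + 2 / e + 1"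
  have vb: "\<bar>deriv r t\<bar> \<le> V" if t: "\<alpha> < t" "t \<le> T2" for t
  proof -
    have sq: "(deriv r t)\<^sup>2 \<le> 2 * H + 2 / e"
      using hb[OF t] inv_le[OF t] vsq_eq[of t] by simp
    show ?thesis
    proof (cases "\<bar>deriv r t\<bar> \<le> 1")
      case True
      have "0 \<le> (deriv r t)\<^sup>2" by simp
      then show ?thesis using True sq unfolding V_def by linarith
    next
      case False
      then have "1 * \<bar>deriv r t\<bar> \<le> \<bar>deriv r t\<bar> * \<bar>deriv r t\<bar>" by (intro mult_right_mono) auto
      then have "\<bar>deriv r t\<bar> \<le> \<bar>deriv r t\<bar> * \<bar>deriv r t\<bar>" by simp
      also have "\<dots> = (deriv r t)\<^sup>2" by (simp add: power2_eq_square abs_mult_self_eq)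
      finally show ?thesis using sq unfolding V_def by linarith
    qed
  qed
  have V0: "0 \<le> V" using vb[of T2] T2 by (meson abs_ge_zero order_trans order_refl)
  define A where "A = D * V + 1 / e\<^sup>2"
  have Fb: "\<bar>- \<delta> (r t) * deriv r t - 1 / (r t)\<^sup>2\<bar> \<le> A" if t: "\<alpha> < t" "t \<le> T2" for t
  proof -
    have rt: "0 < r t" using rpos[OF I2[OF t]] .
    have "\<bar>\<delta> (r t) * deriv r t\<bar> \<le> D * V" unfolding abs_mult
      using D(2)[OF rt] vb[OF t] by (intro mult_mono) auto
    moreover have "1 / (r t)\<^sup>2 \<le> 1 / e\<^sup>2" using rge[OF t] e
      by (intro divide_left_mono power_mono) auto
    moreover have "0 \<le> 1 / (r t)\<^sup>2" by simp
    ultimately show ?thesis unfolding A_def by (simp only: abs_le_iff) linarith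
  qed
  have A0: "0 \<le> A" using Fb[of T2] T2 by (meson abs_ge_zero order_trans order_refl)
  obtain L1 where L1: "((\<lambda>t. r t - V * t) \<longlongrightarrow> L1) (at_right \<alpha>)"
  proof -
    have "\<exists>L. ((\<lambda>t. r t - V * t) \<longlongrightarrow> L) (at_right \<alpha>)"
    proof (rule antimono_limit_right[OF T2(1), where B = "r T2 + V * (T2 - \<alpha>) - V * \<alpha>"])
      fix x y assume xy: "\<alpha> < x" "x \<le> y" "y < T2"
      show "r y - V * y \<le> r x - V * x"
      proof (rule DERIV_nonpos_imp_nonincreasing[OF xy(2)])
        fix z assume z: "x \<le> z" "z \<le> y"
        have zz: "\<alpha> < z" "z \<le> T2" using z xy by auto
        have "((\<lambda>t. r t - V * t) has_real_derivative deriv r z - V) (at z)"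
          using rder[OF I2[OF zz]] by (auto intro!: derivative_eq_intros)
        moreover have "deriv r z - V \<le> 0" using vb[OF zz] by linarith
        ultimately show "\<exists>y. ((\<lambda>t. r t - V * t) has_real_derivative y) (at z) \<and> y \<le> 0" by blast
      qed
    next
      fix x assume x: "\<alpha> < x" "x < T2"
      have "\<bar>r x - r T2\<bar> \<le> V * \<bar>x - T2\<bar>"
      proof (rule lip_deriv[where a = x and b = T2 and f' = "deriv r"])
        fix z assume "x \<le> z" "z \<le> T2"
        then show "(r has_real_derivative deriv r z) (at z)" "\<bar>deriv r z\<bar> \<le> V"
          using rder I2 vb x by auto
      qed (use x in auto)
      then have "r x \<le> r T2 + V * (T2 - \<alpha>)" using x V0
        by (smt (verit, best) mult_left_mono)
      moreover have "V * \<alpha> \<le> V * x" using x V0 by (intro mult_left_mono) auto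
      ultimately show "r x - V * x \<le> r T2 + V * (T2 - \<alpha>) - V * \<alpha>" by linarith
    qed
    then show ?thesis using that by blast
  qed
  have rl: "(r \<longlongrightarrow> L1 + V * \<alpha>) (at_right \<alpha>)"
  proof -
    have "((\<lambda>t. (r t - V * t) + V * t) \<longlongrightarrow> L1 + V * \<alpha>) (at_right \<alpha>)"
      by (intro tendsto_intros L1 tendsto_ident_at)
    then show ?thesis by simp
  qed
  obtain L2 where L2: "((\<lambda>t. deriv r t - A * t) \<longlongrightarrow> L2) (at_right \<alpha>)"
  proof -
    have "\<exists>L. ((\<lambda>t. deriv r t - A * t) \<longlongrightarrow> L) (at_right \<alpha>)"
    proof (rule antimono_limit_right[OF T2(1), where B = "V - A * \<alpha>"])
      fix x y assume xy: "\<alpha> < x" "x \<le> y" "y < T2"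
      show "deriv r y - A * y \<le> deriv r x - A * x"
      proof (rule DERIV_nonpos_imp_nonincreasing[OF xy(2)])
        fix z assume z: "x \<le> z" "z \<le> y"
        have zz: "\<alpha> < z" "z \<le> T2" using z xy by auto
        have "((\<lambda>t. deriv r t - A * t) has_real_derivative (- \<delta> (r z) * deriv r z - 1 / (r z)\<^sup>2) - A) (at z)"
          using vder[OF I2[OF zz]] by (auto intro!: derivative_eq_intros)
        moreover have "(- \<delta> (r z) * deriv r z - 1 / (r z)\<^sup>2) - A \<le> 0" using Fb[OF zz] by linarith
        ultimately show "\<exists>y. ((\<lambda>t. deriv r t - A * t) has_real_derivative y) (at z) \<and> y \<le> 0" by blast
      qed
    next
      fix x assume x: "\<alpha> < x" "x < T2"
      have "deriv r x \<le> V" using vb[of x] x by auto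
      moreover have "A * \<alpha> \<le> A * x" using x A0 by (intro mult_left_mono) auto
      ultimately show "deriv r x - A * x \<le> V - A * \<alpha>" by linarith
    qed
    then show ?thesis using that by blast
  qed
  have vl: "(deriv r \<longlongrightarrow> L2 + A * \<alpha>) (at_right \<alpha>)"
  proof -
    have "((\<lambda>t. (deriv r t - A * t) + A * t) \<longlongrightarrow> L2 + A * \<alpha>) (at_right \<alpha>)"
      by (intro tendsto_intros L2 tendsto_ident_at)
    then show ?thesis by simp
  qed
  have "e \<le> L1 + V * \<alpha>"
  proof (rule tendsto_lowerbound[OF rl])
    show "\<forall>\<^sub>F x in at_right \<alpha>. e \<le> r x"
      unfolding eventually_at_right_field using T2 rge by (intro exI[of _ T2]) auto
  qed simp
  then have "0 < L1 + V * \<alpha>" using e by simp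
  then show ?thesis by (rule ext_lemma[OF rl vl])
qed

lemma r_to_0:
  assumes maxl: "max_left \<delta> \<alpha> \<omega> r"
  shows "(r \<longlongrightarrow> 0) (at_right \<alpha>)"
proof (rule ccontr)
  assume nt: "\<not> (r \<longlongrightarrow> 0) (at_right \<alpha>)"
  obtain t0 where t0: "t0 \<in> ivl \<alpha> \<omega>" using ereal_dense2[OF ivl_ne] by (auto simp: ivl_def)
  have a0: "\<alpha> < t0" using t0 by (simp add: ivl_def)
  from nt obtain e where e: "0 < e" "\<not> eventually (\<lambda>x. dist (r x) 0 < e) (at_right \<alpha>)"
    unfolding tendsto_iff by auto
  have freq: "\<exists>y. \<alpha> < y \<and> y < b \<and> e \<le> r y" if b: "\<alpha> < b" for b
  proof -
    from e(2) have "\<not> (\<exists>b>\<alpha>. \<forall>y>\<alpha>. y < b \<longrightarrow> dist (r y) 0 < e)"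
      unfolding eventually_at_right_field by simp
    then obtain y where y: "\<alpha> < y" "y < min b t0" "\<not> dist (r y) 0 < e" using b a0
      by (metis min_less_iff_conj)
    have "y \<in> ivl \<alpha> \<omega>" using y t0 by (intro inI[of y t0]) auto
    then show ?thesis using y rpos[of y] by (intro exI[of _ y]) (auto simp: dist_real_def)
  qed
  show False
  proof (cases "\<exists>\<epsilon>>0. \<exists>t1>\<alpha>. \<forall>t. \<alpha> < t \<and> t < t1 \<longrightarrow> \<epsilon> \<le> r t")
    case True
    then obtain \<epsilon> t1 where "0 < \<epsilon>" "\<alpha> < t1" "\<And>t. \<alpha> < t \<Longrightarrow> t < t1 \<Longrightarrow> \<epsilon> \<le> r t" by blast
    from caseA[OF this] maxl show False by (auto simp: max_left_def)
  next
    case False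
    then have small: "\<exists>t. \<alpha> < t \<and> t < t1 \<and> r t < \<epsilon>" if "0 < \<epsilon>" "\<alpha> < t1" for \<epsilon> t1
      using that by (meson not_le)
    define c where "c = 1 / (\<bar>hh t0\<bar> + 1)"
    have c: "0 < c" unfolding c_def by (simp add: add_nonneg_pos)
    define m where "m = min e c / 2"
    have m: "0 < m" "m < e" "m < c" using e c by (auto simp: m_def)
    obtain s1 where s1: "\<alpha> < s1" "s1 < t0" "e \<le> r s1" using freq[OF a0] by blast
    obtain t where t: "\<alpha> < t" "t < s1" "r t < m" using small[OF m(1) s1(1)] by blast
    obtain s2 where s2: "\<alpha> < s2" "s2 < t" "e \<le> r s2" using freq[OF t(1)] by blast
    have sub: "{s2..s1} \<subseteq> ivl \<alpha> \<omega>" using s1 s2 t t0 by (auto intro: inI[of _ t0])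
    obtain p where p: "p \<in> {s2..s1}" "\<And>y. y \<in> {s2..s1} \<Longrightarrow> r p \<le> r y"
      using continuous_attains_inf[of "{s2..s1}" r] r_cont[OF sub] s2 t by force
    have rp: "r p < m" using p(2)[of t] t s2 m by auto
    have ps: "s2 < p" "p < s1" using p(1) rp s1 s2 m
      by (metis atLeastAtMost_iff le_less not_less order.strict_trans)+
    have pI: "p \<in> ivl \<alpha> \<omega>" using sub ps by auto
    have "deriv r p = 0"
    proof (rule DERIV_local_min[OF rder[OF pI]])
      show "0 < min (p - s2) (s1 - p)" using ps by simp
      show "\<forall>y. \<bar>p - y\<bar> < min (p - s2) (s1 - p) \<longrightarrow> r p \<le> r y"
        by (auto intro!: p(2))
    qed
    then have "c < r p" unfolding c_def using crit[OF pI t0] ps s1 by simp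
    then show False using rp m by simp
  qed
qed

end

theorem lemma8p1:
  fixes \<delta> :: "real \<Rightarrow> real" and r :: "real \<Rightarrow> real" and \<alpha> :: real and \<omega> :: ereal
  assumes nonneg: "\<forall>x>0. 0 \<le> \<delta> x"
    and bdd: "bounded (\<delta> ` {0<..})"
    and C1: "\<delta> C1_differentiable_on {0<..}"
    and ivl_ne: "ereal \<alpha> < \<omega>"
    and sol: "is_sol \<delta> (ivl \<alpha> \<omega>) r"
    and maxl: "max_left \<delta> \<alpha> \<omega> r"
    and maxr: "max_right \<delta> \<alpha> \<omega> r"
  defines "h \<equiv> (\<lambda>t. (1/2) * (deriv r t)\<^sup>2 - 1 / r t)"
  shows "(r \<longlongrightarrow> 0) (at_right \<alpha>) \<and>
         (\<exists>L::real. (h \<longlongrightarrow> L) (at_right \<alpha>)) \<and>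
         ((\<lambda>t. r t / (t - \<alpha>) powr (2/3)) \<longlongrightarrow> root 3 (9/2)) (at_right \<alpha>)"
proof -
  interpret dsys \<delta> r \<alpha> \<omega>
    using nonneg bdd C1 ivl_ne sol by unfold_locales
  have hh: "h = hh" unfolding h_def hh_def by (rule refl)
  have r0: "(r \<longlongrightarrow> 0) (at_right \<alpha>)" by (rule r_to_0[OF maxl])
  show ?thesis using asym[OF r0] r0 unfolding hh by blast
qed

end
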